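(* Let $k,q\ge0$, $p=k+q$, $m=2^p$, $n=2^q$, and $U_m=\frac{1}{\sqrt{2^p}}H(2^p)$. Fix $c$ with $0\le c\le 2^k-1$ and inject $n$ identical bosons in the input state $\vec s=(1+nc,2+nc,\dots,n+nc)$. Then an output state $\vec t=(t_1,\dots,t_n)$ is suppressed if and only if $\beta_q(t_1-1)\oplus\beta_q(t_2-1)\oplus\dots\oplus\beta_q(t_n-1)\neq0$, where $\beta_q(x)$ denotes the $q$ least significant bits of the binary representation of $x$ (equivalently, the $q$-bit binary representation of $x\bmod 2^q$).
   Context: For $m=2^p$, the Sylvester matrix $H(m)$ is defined recursively by $H(1)=[1]$ and $H(2^p)=\begin{bmatrix}H(2^{p-1})&H(2^{p-1})\\ H(2^{p-1})&-H(2^{p-1})\end{bmatrix}$, rows and columns indexed $1,\dots,m$. $\oplus$ denotes bitwise XOR. An $n$-particle state on $m$ modes is a nondecreasing tuple $\vec t=(t_1\le\dots\le t_n)$ with $t_i\in\{1,\dots,m\}$; $\mu_k(\vec t)=|\{i:t_i=k\}|$. For input $\vec s$ and output $\vec t$, the scattering matrix is $S_{i,j}=U_{t_i,s_j}$, and the bosonic amplitude is $\mathrm{perm}\,S/\sqrt{\prod_k\mu_k(\vec s)!\prod_k\mu_k(\vec t)!}$, where $\mathrm{perm}\,A=\sum_{\sigma\in S_n}\prod_i a_{i,\sigma(i)}$. An output state is suppressed if its amplitude is zero. *)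

theory Defs
  imports "HOL-Combinatorics.Permutations" Complex_Main
begin

text \<open>Sylvester matrix H(2^p), rows/columns indexed 1..2^p (entries outside are irrelevant).\<close>
fun sylvester :: "nat \<Rightarrow> nat \<Rightarrow> nat \<Rightarrow> real" where
  "sylvester 0 i j = 1"
| "sylvester (Suc p) i j =
     (if i \<le> 2^p then
        (if j \<le> 2^p then sylvester p i j else sylvester p i (j - 2^p))
      else
        (if j \<le> 2^p then sylvester p (i - 2^p) j else - sylvester p (i - 2^p) (j - 2^p)))"

definition U_had :: "nat \<Rightarrow> nat \<Rightarrow> nat \<Rightarrow> real" where
  "U_had p i j = sylvester p i j / sqrt (2 ^ p)"

definition perm_mat :: "nat \<Rightarrow> (nat \<Rightarrow> nat \<Rightarrow> real) \<Rightarrow> real" where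
  "perm_mat n A = (\<Sum>\<sigma> | \<sigma> permutes {..<n}. \<Prod>i<n. A i (\<sigma> i))"

text \<open>An n-particle state on m modes: nondecreasing tuple (list) with entries in 1..m.\<close>
definition is_state :: "nat \<Rightarrow> nat \<Rightarrow> nat list \<Rightarrow> bool" where
  "is_state m n t \<longleftrightarrow> length t = n \<and> sorted t \<and> set t \<subseteq> {1..m}"

definition occ :: "nat list \<Rightarrow> nat \<Rightarrow> nat" where
  "occ t k = count_list t k"

definition scatter :: "(nat \<Rightarrow> nat \<Rightarrow> real) \<Rightarrow> nat list \<Rightarrow> nat list \<Rightarrow> nat \<Rightarrow> nat \<Rightarrow> real" where
  "scatter U s t i j = U (t ! i) (s ! j)"

definition amplitude :: "nat \<Rightarrow> (nat \<Rightarrow> nat \<Rightarrow> real) \<Rightarrow> nat list \<Rightarrow> nat list \<Rightarrow> real" where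
  "amplitude m U s t = perm_mat (length s) (scatter U s t) /
     sqrt (real ((\<Prod>k\<in>{1..m}. fact (occ s k)) * (\<Prod>k\<in>{1..m}. fact (occ t k))))"

definition suppressed :: "nat \<Rightarrow> (nat \<Rightarrow> nat \<Rightarrow> real) \<Rightarrow> nat list \<Rightarrow> nat list \<Rightarrow> bool" where
  "suppressed m U s t \<longleftrightarrow> amplitude m U s t = 0"

definition beta :: "nat \<Rightarrow> nat \<Rightarrow> nat" where
  "beta q x = x mod 2 ^ q"

definition xor_list :: "nat list \<Rightarrow> nat" where
  "xor_list xs = foldr (\<lambda>x acc. Bit_Operations.xor x acc) xs 0"

end

theory Submission imports Defs "HOL-Library.FuncSet" begin


definition BS :: "nat \<Rightarrow> nat set" where "BS a = {l. bit a l}"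

lemma BS_finite[simp]: "finite (BS a)"
proof -
  have "BS a \<subseteq> {..<a}"
  proof
    fix l assume "l \<in> BS a"
    then have "odd (a div 2^l)" by (simp add: BS_def bit_iff_odd)
    then have "0 < a div 2^l" using odd_pos by blast
    then have h: "2^l \<le> a" by (simp add: div_greater_zero_iff)
    have "l < a" by (rule less_le_trans[OF less_exp h])
    then show "l \<in> {..<a}" by simp
  qed
  then show ?thesis by (rule finite_subset) simp
qed

definition chi :: "nat \<Rightarrow> nat \<Rightarrow> int" where
  "chi a b = (-1) ^ card (BS a \<inter> BS b)"

lemma chi_pm: "chi a b = 1 \<or> chi a b = -1"
  unfolding chi_def by (cases "even (card (BS a \<inter> BS b))") auto

lemma chi_nz: "chi a b \<noteq> 0" using chi_pm[of a b] by auto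

lemma chi_sq: "chi a b * chi a b = 1" using chi_pm[of a b] by auto

lemma card_symdiff_parity:
  assumes "finite P" "finite Q"
  shows "(-1::int) ^ card ((P - Q) \<union> (Q - P)) = (-1) ^ card P * (-1) ^ card Q"
proof -
  have 1: "card P = card (P - Q) + card (P \<inter> Q)"
  proof -
    have "P = (P - Q) \<union> (P \<inter> Q)" by blast
    then have "card P = card ((P - Q) \<union> (P \<inter> Q))" by simp
    also have "\<dots> = card (P - Q) + card (P \<inter> Q)" using assms by (intro card_Un_disjoint) auto
    finally show ?thesis .
  qed
  have 2: "card Q = card (Q - P) + card (P \<inter> Q)"
  proof -
    have "Q = (Q - P) \<union> (P \<inter> Q)" by blast
    then have "card Q = card ((Q - P) \<union> (P \<inter> Q))" by simp
    also have "\<dots> = card (Q - P) + card (P \<inter> Q)" using assms by (intro card_Un_disjoint) auto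
    finally show ?thesis .
  qed
  have 3: "card ((P - Q) \<union> (Q - P)) = card (P - Q) + card (Q - P)"
    using assms by (intro card_Un_disjoint) auto
  have "(-1::int) ^ card P * (-1) ^ card Q = (-1) ^ (card (P - Q) + card (Q - P)) * ((-1) ^ card (P \<inter> Q))^2"
    unfolding 1 2 by (simp add: power_add power2_eq_square)
  also have "\<dots> = (-1) ^ (card (P - Q) + card (Q - P))"
    by (simp add: power_even_eq[symmetric] flip: power_mult)
  finally show ?thesis using 3 by simp
qed

lemma BS_xor: "BS (xor a b) = (BS a - BS b) \<union> (BS b - BS a)"
  by (auto simp: BS_def bit_xor_iff)

lemma chi_xor_right: "chi a (xor b c) = chi a b * chi a c"
proof -
  have "BS a \<inter> BS (xor b c) = ((BS a \<inter> BS b) - (BS a \<inter> BS c)) \<union> ((BS a \<inter> BS c) - (BS a \<inter> BS b))"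
    by (auto simp: BS_xor)
  then show ?thesis unfolding chi_def by (simp add: card_symdiff_parity)
qed

lemma chi_0[simp]: "chi a 0 = 1" by (simp add: chi_def BS_def)
lemma chi_0'[simp]: "chi 0 a = 1" by (simp add: chi_def BS_def)

lemma chi_pow2: "chi a (2^l) = (if bit a l then -1 else 1)"
proof -
  have "BS a \<inter> BS (2^l) = (if bit a l then {l} else {})"
    by (auto simp: BS_def bit_exp_iff)
  then show ?thesis by (simp add: chi_def)
qed

lemma chi_split: "chi a x = chi (a mod 2^q) (x mod 2^q) * chi (a div 2^q) (x div 2^q)"
proof -
  let ?S = "BS a \<inter> BS x"
  have low: "{l \<in> ?S. l < q} = BS (a mod 2^q) \<inter> BS (x mod 2^q)"
    by (auto simp: BS_def bit_take_bit_iff simp flip: take_bit_eq_mod)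
  have high: "{l \<in> ?S. \<not> l < q} = (\<lambda>m. q + m) ` (BS (a div 2^q) \<inter> BS (x div 2^q))"
  proof -
    have *: "\<And>m. bit (a div 2^q) m = bit a (q + m)" "\<And>m. bit (x div 2^q) m = bit x (q + m)"
      by (simp_all add: bit_drop_bit_eq flip: drop_bit_eq_div)
    then show ?thesis
    proof (intro set_eqI iffI)
      fix l assume "l \<in> {l \<in> ?S. \<not> l < q}"
      then show "l \<in> (\<lambda>m. q + m) ` (BS (a div 2^q) \<inter> BS (x div 2^q))"
        using * by (intro image_eqI[of _ _ "l - q"]) (auto simp: BS_def)
    qed (auto simp: BS_def)
  qed
  have "card ?S = card ({l \<in> ?S. l < q} \<union> {l \<in> ?S. \<not> l < q})"
    by (rule arg_cong[where f=card]) blast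
  also have "\<dots> = card {l \<in> ?S. l < q} + card {l \<in> ?S. \<not> l < q}"
    by (intro card_Un_disjoint) auto
  also have "card {l \<in> ?S. \<not> l < q} = card (BS (a div 2^q) \<inter> BS (x div 2^q))"
    unfolding high by (intro card_image) (auto simp: inj_on_def)
  finally show ?thesis unfolding chi_def low by (simp add: power_add)
qed
lemma chi_1_1: "chi 1 1 = -1"
  using chi_pow2[of 1 0] by (simp add: bit_iff_odd)

lemma div_mod_half:
  fixes x :: nat
  assumes "x < 2 * 2^p"
  shows "x div 2^p = (if x < 2^p then 0 else 1) \<and> x mod 2^p = (if x < 2^p then x else x - 2^p)"
proof (cases "x < 2^p")
  case True then show ?thesis by simp
next
  case False
  then have "x = 2^p + (x - 2^p)" "x - 2^p < 2^p" using assms by auto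
  then show ?thesis using False
  proof -
    have "x div 2^p = (2^p + (x - 2^p)) div 2^p" using \<open>x = _\<close> by simp
    also have "\<dots> = 1" using \<open>x - 2^p < 2^p\<close> by (simp add: div_add_self1)
    finally have 1: "x div 2^p = 1" .
    have "x mod 2^p = (2^p + (x - 2^p)) mod 2^p" using \<open>x = _\<close> by simp
    also have "\<dots> = x - 2^p" using \<open>x - 2^p < 2^p\<close> by simp
    finally show ?thesis using 1 False by simp
  qed
qed

lemma sylvester_chi:
  "1 \<le> i \<Longrightarrow> i \<le> 2^p \<Longrightarrow> 1 \<le> j \<Longrightarrow> j \<le> 2^p \<Longrightarrow>
   sylvester p i j = real_of_int (chi (i - 1) (j - 1))"
proof (induction p arbitrary: i j)
  case 0
  then show ?case by simp
next
  case (Suc p)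
  have hi: "i - 1 < 2 * 2^p" and hj: "j - 1 < 2 * 2^p" using Suc.prems by auto
  have split: "chi (i - 1) (j - 1) = chi ((i-1) mod 2^p) ((j-1) mod 2^p) * chi ((i-1) div 2^p) ((j-1) div 2^p)"
    by (rule chi_split)
  note di = div_mod_half[OF hi] and dj = div_mod_half[OF hj]
  show ?case
  proof (cases "i \<le> 2^p")
    case ci: True
    show ?thesis
    proof (cases "j \<le> 2^p")
      case cj: True
      have "i - 1 < 2^p" "j - 1 < 2^p" using ci cj Suc.prems by auto
      then show ?thesis using ci cj Suc.prems Suc.IH[of i j] split di dj by simp
    next
      case cj: False
      have "i - 1 < 2^p" "\<not> j - 1 < 2^p" "j - 2^p - 1 = j - 1 - 2^p" using ci cj Suc.prems by auto
      then show ?thesis using ci cj Suc.prems Suc.IH[of i "j - 2^p"] split di dj by simp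
    qed
  next
    case ci: False
    show ?thesis
    proof (cases "j \<le> 2^p")
      case cj: True
      have "\<not> i - 1 < 2^p" "j - 1 < 2^p" "i - 2^p - 1 = i - 1 - 2^p" using ci cj Suc.prems by auto
      then show ?thesis using ci cj Suc.prems Suc.IH[of "i - 2^p" j] split di dj by simp
    next
      case cj: False
      have "\<not> i - 1 < 2^p" "\<not> j - 1 < 2^p" "i - 2^p - 1 = i - 1 - 2^p" "j - 2^p - 1 = j - 1 - 2^p" using ci cj Suc.prems by auto
      then show ?thesis using ci cj Suc.prems Suc.IH[of "i - 2^p" "j - 2^p"] split di dj chi_1_1 by simp
    qed
  qed
qed



definition Bij :: "nat set \<Rightarrow> nat set \<Rightarrow> (nat \<Rightarrow> nat) set" where
  "Bij R C = {f. f \<in> R \<rightarrow>\<^sub>E C \<and> bij_betw f R C}"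

lemma finite_Bij[simp]: "finite R \<Longrightarrow> finite C \<Longrightarrow> finite (Bij R C)"
  unfolding Bij_def by (rule finite_subset[OF _ finite_PiE[of R "\<lambda>_. C"]]) auto

definition split3 :: "nat \<Rightarrow> nat set \<Rightarrow> (nat \<Rightarrow> nat) \<Rightarrow> nat set \<times> (nat \<Rightarrow> nat) \<times> (nat \<Rightarrow> nat)" where
  "split3 n R f = ({i\<in>R. f i < n}, restrict f {i\<in>R. f i < n}, restrict (\<lambda>i. f i - n) (R - {i\<in>R. f i < n}))"

definition merge3 :: "nat \<Rightarrow> nat set \<Rightarrow> nat set \<times> (nat \<Rightarrow> nat) \<times> (nat \<Rightarrow> nat) \<Rightarrow> (nat \<Rightarrow> nat)" where
  "merge3 n R b = (\<lambda>i. if i \<in> fst b then fst (snd b) i else if i \<in> R then n + snd (snd b) i else undefined)"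

lemma laplace:
  fixes A :: "nat \<Rightarrow> nat \<Rightarrow> int"
  assumes fin: "finite R"
  shows "(\<Sum>f\<in>Bij R {..<2*n}. \<Prod>i\<in>R. A i (f i)) =
    (\<Sum>R1\<in>{R1. R1 \<subseteq> R \<and> card R1 = n}.
       (\<Sum>f1\<in>Bij R1 {..<n}. \<Prod>i\<in>R1. A i (f1 i)) * (\<Sum>f2\<in>Bij (R - R1) {..<n}. \<Prod>i\<in>R-R1. A i (n + f2 i)))"
proof -
  let ?Sub = "{R1. R1 \<subseteq> R \<and> card R1 = n}"
  let ?T = "Sigma ?Sub (\<lambda>R1. Bij R1 {..<n} \<times> Bij (R - R1) {..<n})"
  let ?h = "\<lambda>b::nat set \<times> (nat \<Rightarrow> nat) \<times> (nat \<Rightarrow> nat). (\<Prod>i\<in>fst b. A i (fst (snd b) i)) * (\<Prod>i\<in>R - fst b. A i (n + snd (snd b) i))"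
  have finSub: "finite ?Sub" using fin by (rule finite_subset[rotated, OF finite_Pow_iff[THEN iffD2]]) auto
  have "(\<Sum>R1\<in>?Sub. (\<Sum>f1\<in>Bij R1 {..<n}. \<Prod>i\<in>R1. A i (f1 i)) * (\<Sum>f2\<in>Bij (R - R1) {..<n}. \<Prod>i\<in>R-R1. A i (n + f2 i)))
     = (\<Sum>R1\<in>?Sub. \<Sum>p\<in>Bij R1 {..<n} \<times> Bij (R - R1) {..<n}. ?h (R1, p))"
  proof (rule sum.cong[OF refl])
    fix R1 assume "R1 \<in> ?Sub"
    then have "finite R1" "finite (R - R1)" using fin by (auto intro: finite_subset)
    then show "(\<Sum>f1\<in>Bij R1 {..<n}. \<Prod>i\<in>R1. A i (f1 i)) * (\<Sum>f2\<in>Bij (R - R1) {..<n}. \<Prod>i\<in>R-R1. A i (n + f2 i))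
       = (\<Sum>p\<in>Bij R1 {..<n} \<times> Bij (R - R1) {..<n}. ?h (R1, p))"
      unfolding sum_product by (subst sum.cartesian_product) (simp add: split_beta)
  qed
  also have "\<dots> = (\<Sum>b\<in>?T. ?h b)"
    using finSub fin by (subst sum.Sigma) (simp_all add: split_beta, meson finite_Bij finite_Diff finite_SigmaI finite_cartesian_product finite_lessThan finite_subset)
  also have "\<dots> = (\<Sum>f\<in>Bij R {..<2*n}. \<Prod>i\<in>R. A i (f i))"
  proof (rule sym, rule sum.reindex_bij_witness[where i="merge3 n R" and j="split3 n R"])
    fix f assume f: "f \<in> Bij R {..<2*n}"
    then have fP: "f \<in> R \<rightarrow>\<^sub>E {..<2*n}" and fb: "bij_betw f R {..<2*n}" by (auto simp: Bij_def)
    show "merge3 n R (split3 n R f) = f"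
    proof
      fix i show "merge3 n R (split3 n R f) i = f i"
        using fP by (cases "i \<in> R") (auto simp: merge3_def split3_def PiE_def extensional_def)
    qed
    let ?R1 = "{i\<in>R. f i < n}"
    have inj: "inj_on f R" using fb by (simp add: bij_betw_def)
    have img: "f ` R = {..<2*n}" using fb by (simp add: bij_betw_def)
    have b1: "bij_betw f ?R1 {..<n}"
      unfolding bij_betw_def
    proof
      show "inj_on f ?R1" using inj by (rule inj_on_subset) auto
      show "f ` ?R1 = {..<n}"
      proof
        show "f ` ?R1 \<subseteq> {..<n}" by auto
        show "{..<n} \<subseteq> f ` ?R1"
        proof
          fix y assume "y \<in> {..<n}"
          then have "y \<in> f ` R" using img by auto
          then obtain i where "i \<in> R" "y = f i" by auto
          then show "y \<in> f ` ?R1" using \<open>y \<in> {..<n}\<close> by auto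
        qed
      qed
    qed
    have b2: "bij_betw (\<lambda>i. f i - n) (R - ?R1) {..<n}"
      unfolding bij_betw_def
    proof
      show "inj_on (\<lambda>i. f i - n) (R - ?R1)"
      proof (rule inj_onI)
        fix x y assume "x \<in> R - ?R1" "y \<in> R - ?R1" "f x - n = f y - n"
        then have "f x = f y" by auto
        with inj \<open>x \<in> R - ?R1\<close> \<open>y \<in> R - ?R1\<close> show "x = y" by (auto simp: inj_on_def)
      qed
      show "(\<lambda>i. f i - n) ` (R - ?R1) = {..<n}"
      proof
        show "(\<lambda>i. f i - n) ` (R - ?R1) \<subseteq> {..<n}" using fP by (auto simp: PiE_def Pi_def)
        show "{..<n} \<subseteq> (\<lambda>i. f i - n) ` (R - ?R1)"
        proof
          fix y assume "y \<in> {..<n}"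
          then have "n + y \<in> f ` R" using img by auto
          then obtain i where "i \<in> R" "n + y = f i" by auto
          then show "y \<in> (\<lambda>i. f i - n) ` (R - ?R1)"
            by (intro image_eqI[of _ _ i]) auto
        qed
      qed
    qed
    have c1: "card ?R1 = n" using bij_betw_same_card[OF b1] by simp
    have "restrict f ?R1 \<in> Bij ?R1 {..<n}"
      using b1 unfolding Bij_def by (auto simp: bij_betw_def inj_on_def)
    moreover have "restrict (\<lambda>i. f i - n) (R - ?R1) \<in> Bij (R - ?R1) {..<n}"
      using b2 unfolding Bij_def by (auto simp: bij_betw_def inj_on_def)
    ultimately show "split3 n R f \<in> ?T" using c1 by (auto simp: split3_def)
    have "?h (split3 n R f) = (\<Prod>i\<in>?R1. A i (f i)) * (\<Prod>i\<in>R - ?R1. A i (f i))"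
      unfolding split3_def fst_conv snd_conv
    proof (rule arg_cong2[where f="(*)"])
      show "(\<Prod>i\<in>?R1. A i (restrict f ?R1 i)) = (\<Prod>i\<in>?R1. A i (f i))"
        by (rule prod.cong) auto
      show "(\<Prod>i\<in>R - ?R1. A i (n + restrict (\<lambda>i. f i - n) (R - ?R1) i)) = (\<Prod>i\<in>R - ?R1. A i (f i))"
      proof (rule prod.cong[OF refl])
        fix i assume "i \<in> R - ?R1"
        then have "\<not> f i < n" by auto
        then show "A i (n + restrict (\<lambda>i. f i - n) (R - ?R1) i) = A i (f i)"
          using \<open>i \<in> R - ?R1\<close> by simp
      qed
    qed
    also have "\<dots> = (\<Prod>i\<in>R. A i (f i))"
      using fin by (metis (no_types, lifting) mem_Collect_eq prod.subset_diff subsetI mult.commute)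
    finally show "?h (split3 n R f) = (\<Prod>i\<in>R. A i (f i))" .
  next
    fix b assume b: "b \<in> ?T"
    obtain R1 f1 f2 where bb: "b = (R1, f1, f2)" by (cases b) auto
    have R1: "R1 \<subseteq> R" "card R1 = n" and f1: "f1 \<in> R1 \<rightarrow>\<^sub>E {..<n}" "bij_betw f1 R1 {..<n}"
      and f2: "f2 \<in> (R - R1) \<rightarrow>\<^sub>E {..<n}" "bij_betw f2 (R - R1) {..<n}"
      using b bb by (auto simp: Bij_def)
    let ?g = "merge3 n R b"
    have g1: "\<And>i. i \<in> R1 \<Longrightarrow> ?g i = f1 i" and g2: "\<And>i. i \<in> R - R1 \<Longrightarrow> ?g i = n + f2 i"
      and g3: "\<And>i. i \<notin> R \<Longrightarrow> ?g i = undefined"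
      using R1 by (auto simp: merge3_def bb)
    have set1: "{i\<in>R. ?g i < n} = R1"
    proof (intro set_eqI iffI)
      fix x assume x: "x \<in> {i\<in>R. ?g i < n}"
      show "x \<in> R1"
      proof (rule ccontr)
        assume "x \<notin> R1"
        then have "?g x = n + f2 x" using g2 x by auto
        then show False using x by auto
      qed
    next
      fix x assume x: "x \<in> R1"
      then have "?g x = f1 x" using g1 by auto
      moreover have "f1 x < n" using f1 x by (auto simp: PiE_def Pi_def)
      ultimately show "x \<in> {i\<in>R. ?g i < n}" using x R1 by auto
    qed
    have e1: "restrict ?g R1 = f1"
    proof
      fix x show "restrict ?g R1 x = f1 x"
        using f1 g1 by (cases "x \<in> R1") (auto simp: PiE_def extensional_def)
    qed
    have e2: "restrict (\<lambda>i. ?g i - n) (R - R1) = f2"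
    proof
      fix x show "restrict (\<lambda>i. ?g i - n) (R - R1) x = f2 x"
        using f2 g2 by (cases "x \<in> R - R1") (auto simp: PiE_def extensional_def)
    qed
    show "split3 n R ?g = b" unfolding split3_def set1 using e1 e2 bb by simp
    have f1v: "\<And>i. i \<in> R1 \<Longrightarrow> f1 i < n" and f2v: "\<And>i. i \<in> R - R1 \<Longrightarrow> f2 i < n"
      using f1 f2 by (auto simp: PiE_def Pi_def)
    have inj1: "inj_on f1 R1" and img1: "f1 ` R1 = {..<n}" using f1 by (auto simp: bij_betw_def)
    have inj2: "inj_on f2 (R - R1)" and img2: "f2 ` (R - R1) = {..<n}" using f2 by (auto simp: bij_betw_def)
    have P: "?g \<in> R \<rightarrow>\<^sub>E {..<2*n}"
    proof
      fix x assume "x \<in> R"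
      show "?g x \<in> {..<2*n}"
      proof (cases "x \<in> R1")
        case True with f1v[of x] g1[of x] show ?thesis by simp
      next
        case False with f2v[of x] g2[of x] \<open>x \<in> R\<close> show ?thesis by simp
      qed
    next
      fix x assume "x \<notin> R" then show "?g x = undefined" by (rule g3)
    qed
    have I: "inj_on ?g R"
    proof (rule inj_onI)
      fix x y assume x: "x \<in> R" and y: "y \<in> R" and e: "?g x = ?g y"
      show "x = y"
      proof (cases "x \<in> R1"; cases "y \<in> R1")
        assume "x \<in> R1" "y \<in> R1" then show ?thesis using e g1 inj1 by (auto simp: inj_on_def)
      next
        assume "x \<in> R1" "y \<notin> R1" then show ?thesis using e g1 g2 f1v y by fastforce
      next
        assume "x \<notin> R1" "y \<in> R1" then show ?thesis using e g1 g2 f1v x by fastforce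
      next
        assume "x \<notin> R1" "y \<notin> R1" then show ?thesis using e g2 inj2 x y by (auto simp: inj_on_def)
      qed
    qed
    have Im: "?g ` R = {..<2*n}"
    proof
      show "?g ` R \<subseteq> {..<2*n}" using P by (auto simp: PiE_def Pi_def)
      show "{..<2*n} \<subseteq> ?g ` R"
      proof
        fix y assume y: "y \<in> {..<2*n}"
        show "y \<in> ?g ` R"
        proof (cases "y < n")
          case True
          then obtain i where "i \<in> R1" "f1 i = y" using img1 by (metis imageE lessThan_iff)
          then show ?thesis using g1 R1 by (metis image_eqI subsetD)
        next
          case False
          then have "y - n \<in> {..<n}" using y by auto
          then obtain i where i: "i \<in> R - R1" "f2 i = y - n" using img2 by (metis imageE)
          then have "?g i = y" using g2 False by auto
          then show ?thesis using i by (metis DiffD1 image_eqI)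
        qed
      qed
    qed
    show "merge3 n R b \<in> Bij R {..<2*n}" using P I Im by (simp add: Bij_def bij_betw_def)
  qed
  finally show ?thesis ..
qed



definition gperm :: "nat \<Rightarrow> nat set \<Rightarrow> (nat \<Rightarrow> nat) \<Rightarrow> int" where
  "gperm N R \<alpha> = (\<Sum>f\<in>Bij R {..<N}. \<Prod>i\<in>R. chi (\<alpha> i) (f i))"

definition cnt :: "(nat \<Rightarrow> nat) \<Rightarrow> nat \<Rightarrow> nat set \<Rightarrow> nat" where
  "cnt \<alpha> l S = card {i\<in>S. bit (\<alpha> i) l}"

lemma prod_sign: "finite R \<Longrightarrow> (\<Prod>i\<in>R. (if P i then -1 else 1::int)) = (-1) ^ card {i\<in>R. P i}"
proof (induction R rule: finite_induct)
  case empty then show ?case by simp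
next
  case (insert x F)
  have "{i \<in> insert x F. P i} = (if P x then insert x {i\<in>F. P i} else {i\<in>F. P i})" by auto
  moreover have "finite {i\<in>F. P i}" "x \<notin> {i\<in>F. P i}" using insert by auto
  ultimately show ?case using insert by simp
qed

lemma xor_less: "x < 2^q \<Longrightarrow> y < 2^q \<Longrightarrow> xor x y < (2::nat)^q"
proof -
  assume a: "x < 2^q" "y < 2^q"
  have "take_bit q (xor x y) = xor (take_bit q x) (take_bit q y)" by simp
  also have "\<dots> = xor x y" using a by (simp add: take_bit_nat_eq_self)
  finally have "take_bit q (xor x y) = xor x y" .
  then show ?thesis by (simp only: take_bit_nat_eq_self_iff)
qed

lemma xor_xor_same: "xor (xor (x::nat) v) v = x"
  by (auto simp: bit_eq_iff bit_xor_iff)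

lemma gperm_zero:
  assumes fin: "finite R" and l: "l < q" and odd: "odd (cnt \<alpha> l R)"
  shows "gperm (2^q) R \<alpha> = 0"
proof -
  define v :: nat where "v = 2^l"
  have v: "v < 2^q" using l by (simp add: v_def)
  define T where "T f = (\<lambda>i. if i \<in> R then xor (f i) v else undefined)" for f :: "nat \<Rightarrow> nat"
  let ?B = "Bij R {..<2^q}"
  have TB: "T f \<in> ?B" if f: "f \<in> ?B" for f
  proof -
    have fP: "f \<in> R \<rightarrow>\<^sub>E {..<2^q}" and inj: "inj_on f R" and img: "f ` R = {..<2^q}"
      using f by (auto simp: Bij_def bij_betw_def)
    have P: "T f \<in> R \<rightarrow>\<^sub>E {..<2^q}"
      using fP v by (auto simp: T_def PiE_def Pi_def extensional_def intro: xor_less)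
    have I: "inj_on (T f) R"
    proof (rule inj_onI)
      fix x y assume "x \<in> R" "y \<in> R" "T f x = T f y"
      then have "xor (f x) v = xor (f y) v" by (simp add: T_def)
      then have "xor (xor (f x) v) v = xor (xor (f y) v) v" by simp
      then have "f x = f y" by (simp add: xor_xor_same)
      then show "x = y" using inj \<open>x \<in> R\<close> \<open>y \<in> R\<close> by (auto simp: inj_on_def)
    qed
    have Im: "T f ` R = {..<2^q}"
    proof
      show "T f ` R \<subseteq> {..<2^q}" using P by (auto simp: PiE_def Pi_def)
      show "{..<2^q} \<subseteq> T f ` R"
      proof
        fix y assume "y \<in> {..<(2::nat)^q}"
        then have "xor y v \<in> {..<2^q}" using v by (simp add: xor_less)
        then obtain i where i: "i \<in> R" "f i = xor y v" using img by (metis imageE)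
        then have "T f i = y" by (simp add: T_def xor_xor_same)
        then show "y \<in> T f ` R" using i by auto
      qed
    qed
    show ?thesis using P I Im by (simp add: Bij_def bij_betw_def)
  qed
  have TT: "T (T f) = f" if f: "f \<in> ?B" for f
  proof
    fix i show "T (T f) i = f i"
      using f by (cases "i \<in> R") (auto simp: T_def xor_xor_same Bij_def PiE_def extensional_def)
  qed
  have sgn: "(\<Prod>i\<in>R. chi (\<alpha> i) v) = -1"
    using odd fin by (simp add: v_def chi_pow2 prod_sign cnt_def)
  have "gperm (2^q) R \<alpha> = (\<Sum>f\<in>?B. \<Prod>i\<in>R. chi (\<alpha> i) (T f i))"
    unfolding gperm_def
    by (rule sum.reindex_bij_witness[where i=T and j=T]) (auto simp: TB TT)
  also have "\<dots> = (\<Sum>f\<in>?B. (\<Prod>i\<in>R. chi (\<alpha> i) (f i)) * (\<Prod>i\<in>R. chi (\<alpha> i) v))"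
    by (rule sum.cong[OF refl]) (simp add: T_def chi_xor_right prod.distrib)
  also have "\<dots> = - gperm (2^q) R \<alpha>"
    unfolding sgn gperm_def by (simp add: sum_negf)
  finally show ?thesis by simp
qed



lemma even_sum_card: "finite A \<Longrightarrow> even (sum (c::'a \<Rightarrow> nat) A) \<longleftrightarrow> even (card {x\<in>A. odd (c x)})"
proof (induction A rule: finite_induct)
  case empty then show ?case by simp
next
  case (insert x F)
  have "{y \<in> insert x F. odd (c y)} = (if odd (c x) then insert x {y\<in>F. odd (c y)} else {y\<in>F. odd (c y)})" by auto
  moreover have "finite {y\<in>F. odd (c y)}" "x \<notin> {y\<in>F. odd (c y)}" using insert by auto
  ultimately show ?case using insert by auto
qed

lemma sum_odds: "finite A \<Longrightarrow> (\<forall>x\<in>A. odd (w x :: int)) \<Longrightarrow> odd (sum w A) \<longleftrightarrow> odd (card A)"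
proof (induction A rule: finite_induct)
  case empty then show ?case by simp
next
  case (insert x F)
  then show ?case by auto
qed

lemma sum_odds_nat: "finite A \<Longrightarrow> (\<forall>x\<in>A. odd (w x :: nat)) \<Longrightarrow> odd (sum w A) \<longleftrightarrow> odd (card A)"
proof (induction A rule: finite_induct)
  case empty then show ?case by simp
next
  case (insert x F)
  then show ?case by auto
qed

lemma even_choose_pow2:
  assumes "0 < j" "j < 2^q"
  shows "even ((2::nat)^q choose j)"
proof (rule ccontr)
  assume o: "\<not> even ((2::nat)^q choose j)"
  have "j * (2^q choose j) = 2^q * (2^q - 1 choose (j - 1))"
    using assms(1) by (rule times_binomial_minus1_eq)
  then have d: "(2::nat)^q dvd j * (2^q choose j)" by (metis dvd_triv_left)
  have "coprime (2::nat) (2^q choose j)" using o by (simp add: coprime_left_2_iff_odd)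
  then have "coprime ((2::nat)^q) (2^q choose j)" by (simp add: coprime_power_left_iff)
  then have "(2::nat)^q dvd j" using d by (simp add: coprime_dvd_mult_left_iff)
  then have "2^q \<le> j" using assms(1) by (simp add: dvd_imp_le)
  then show False using assms(2) by simp
qed

lemma odd_choose:
  assumes "m < 2^q"
  shows "odd (2^q + m choose m)"
proof (cases m)
  case 0 then show ?thesis by simp
next
  case (Suc m')
  have "2^q + m choose m = (\<Sum>k\<le>m. (2^q choose k) * (m choose (m - k)))"
    by (simp add: vandermonde)
  also have "\<dots> = 1 + (\<Sum>i\<le>m'. (2^q choose Suc i) * (m choose (m - Suc i)))"
    unfolding Suc by (subst sum.atMost_Suc_shift) simp
  finally have e: "2^q + m choose m = 1 + (\<Sum>i\<le>m'. (2^q choose Suc i) * (m choose (m - Suc i)))" .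
  have "even (\<Sum>i\<le>m'. (2^q choose Suc i) * (m choose (m - Suc i)))"
  proof (rule dvd_sum)
    fix i assume "i \<in> {..m'}"
    then have "Suc i < 2^q" using assms Suc by auto
    then show "even ((2^q choose Suc i) * (m choose (m - Suc i)))"
      using even_choose_pow2[of "Suc i" q] by simp
  qed
  then show ?thesis using e by simp
qed

lemma suc_le_pow2: "Suc q \<le> 2^q"
  by (rule Suc_leI[OF less_exp])



lemma parity_count:
  fixes R :: "nat set" and \<alpha> :: "nat \<Rightarrow> nat"
  assumes fin: "finite R" and cR: "card R = 2 * 2^q" and evR: "\<forall>l<q. even (cnt \<alpha> l R)"
  shows "finite L \<Longrightarrow> L \<subseteq> {..<q} \<Longrightarrow> U \<subseteq> R \<Longrightarrow> U \<noteq> {} \<Longrightarrow> card U + card L \<le> q + 1 \<Longrightarrow>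
    odd (card {R1. U \<subseteq> R1 \<and> R1 \<subseteq> R \<and> card R1 = 2^q \<and> (\<forall>l\<in>L. even (cnt \<alpha> l R1))})"
proof (induction L arbitrary: U rule: finite_induct)
  case empty
  let ?F = "{R1. U \<subseteq> R1 \<and> R1 \<subseteq> R \<and> card R1 = 2^q}"
  have finU: "finite U" using empty fin by (auto intro: finite_subset)
  have u1: "1 \<le> card U" using empty finU by (simp add: Suc_le_eq card_gt_0_iff)
  have uq: "card U \<le> 2^q" using empty suc_le_pow2[of q] by simp
  have cRU: "card (R - U) = 2 * 2^q - card U" using empty fin by (simp add: card_Diff_subset finU cR)
  have "bij_betw (\<lambda>R1. R1 - U) ?F {B. B \<subseteq> R - U \<and> card B = 2^q - card U}"
  proof (rule bij_betw_byWitness[where f'="\<lambda>B. B \<union> U"])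
    show "\<forall>a\<in>?F. a - U \<union> U = a" by auto
    show "\<forall>a'\<in>{B. B \<subseteq> R - U \<and> card B = 2^q - card U}. a' \<union> U - U = a'" by auto
    show "(\<lambda>R1. R1 - U) ` ?F \<subseteq> {B. B \<subseteq> R - U \<and> card B = 2^q - card U}"
    proof
      fix B assume "B \<in> (\<lambda>R1. R1 - U) ` ?F"
      then obtain R1 where "R1 \<in> ?F" "B = R1 - U" by auto
      moreover then have "finite R1" using fin by (auto intro: finite_subset)
      ultimately show "B \<in> {B. B \<subseteq> R - U \<and> card B = 2^q - card U}"
        by (auto simp: card_Diff_subset finU)
    qed
    show "(\<lambda>B. B \<union> U) ` {B. B \<subseteq> R - U \<and> card B = 2^q - card U} \<subseteq> ?F"
    proof
      fix C assume "C \<in> (\<lambda>B. B \<union> U) ` {B. B \<subseteq> R - U \<and> card B = 2^q - card U}"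
      then obtain B where B: "B \<subseteq> R - U" "card B = 2^q - card U" "C = B \<union> U" by auto
      then have "finite B" using fin by (auto intro: finite_subset)
      then have "card (B \<union> U) = card B + card U" using B finU by (intro card_Un_disjoint) auto
      then have "card C = 2^q" using B uq by simp
      then show "C \<in> ?F" using B empty by auto
    qed
  qed
  then have "card ?F = card {B. B \<subseteq> R - U \<and> card B = 2^q - card U}" by (rule bij_betw_same_card)
  also have "\<dots> = (2 * 2^q - card U) choose (2^q - card U)" using fin cRU by (simp add: n_subsets)
  also have "2 * 2^q - card U = 2^q + (2^q - card U)" using uq by simp
  finally have "card ?F = 2^q + (2^q - card U) choose (2^q - card U)" .
  moreover have "odd (2^q + (2^q - card U) choose (2^q - card U))"
    by (rule odd_choose) (use u1 in simp)
  ultimately show ?case by simp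
next
  case (insert l L)
  let ?F = "{R1. U \<subseteq> R1 \<and> R1 \<subseteq> R \<and> card R1 = 2^q \<and> (\<forall>l\<in>L. even (cnt \<alpha> l R1))}"
  let ?Rl = "{i\<in>R. bit (\<alpha> i) l}"
  have finF: "finite ?F" using fin by (rule finite_subset[rotated, OF finite_Pow_iff[THEN iffD2]]) auto
  have finRl: "finite ?Rl" using fin by simp
  have IHF: "odd (card ?F)" using insert by (intro insert.IH) auto
  have IHi: "odd (card {R1\<in>?F. i \<in> R1})" if i: "i \<in> R" for i
  proof -
    have "{R1\<in>?F. i \<in> R1} = {R1. insert i U \<subseteq> R1 \<and> R1 \<subseteq> R \<and> card R1 = 2^q \<and> (\<forall>l\<in>L. even (cnt \<alpha> l R1))}"
      by auto
    moreover have "odd (card {R1. insert i U \<subseteq> R1 \<and> R1 \<subseteq> R \<and> card R1 = 2^q \<and> (\<forall>l\<in>L. even (cnt \<alpha> l R1))})"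
    proof (rule insert.IH)
      have "finite U" using insert fin by (auto intro: finite_subset)
      then have "card (insert i U) \<le> card U + 1" by (simp add: card_insert_if)
      then show "card (insert i U) + card L \<le> q + 1" using insert by simp
    qed (use insert i in auto)
    ultimately show ?thesis by simp
  qed
  have cntsum: "cnt \<alpha> l R1 = (\<Sum>i\<in>?Rl. if i \<in> R1 then 1 else 0)" if "R1 \<in> ?F" for R1
  proof -
    have "{i\<in>R1. bit (\<alpha> i) l} = {i\<in>?Rl. i \<in> R1}" using that by auto
    then show ?thesis unfolding cnt_def using finRl by (simp add: sum.inter_filter[symmetric])
  qed
  have "(\<Sum>R1\<in>?F. cnt \<alpha> l R1) = (\<Sum>R1\<in>?F. \<Sum>i\<in>?Rl. if i \<in> R1 then 1 else 0)"
    by (rule sum.cong[OF refl]) (rule cntsum)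
  also have "\<dots> = (\<Sum>i\<in>?Rl. \<Sum>R1\<in>?F. if i \<in> R1 then 1 else 0)" by (rule sum.swap)
  also have "\<dots> = (\<Sum>i\<in>?Rl. card {R1\<in>?F. i \<in> R1})"
    using finF by (simp add: sum.inter_filter[symmetric])
  finally have S: "(\<Sum>R1\<in>?F. cnt \<alpha> l R1) = (\<Sum>i\<in>?Rl. card {R1\<in>?F. i \<in> R1})" .
  have "even (\<Sum>i\<in>?Rl. card {R1\<in>?F. i \<in> R1})"
  proof -
    have "odd (\<Sum>i\<in>?Rl. card {R1\<in>?F. i \<in> R1}) \<longleftrightarrow> odd (card ?Rl)"
      using finRl IHi by (intro sum_odds_nat) auto
    moreover have "even (card ?Rl)" using evR insert by (auto simp: cnt_def)
    ultimately show ?thesis by simp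
  qed
  then have "even (card {R1\<in>?F. odd (cnt \<alpha> l R1)})" using S even_sum_card[OF finF, of "\<lambda>R1. cnt \<alpha> l R1"] by simp
  moreover have "card ?F = card {R1\<in>?F. even (cnt \<alpha> l R1)} + card {R1\<in>?F. odd (cnt \<alpha> l R1)}"
  proof -
    have "?F = {R1\<in>?F. even (cnt \<alpha> l R1)} \<union> {R1\<in>?F. odd (cnt \<alpha> l R1)}" by auto
    then have "card ?F = card ({R1\<in>?F. even (cnt \<alpha> l R1)} \<union> {R1\<in>?F. odd (cnt \<alpha> l R1)})"
      by (rule arg_cong)
    also have "\<dots> = card {R1\<in>?F. even (cnt \<alpha> l R1)} + card {R1\<in>?F. odd (cnt \<alpha> l R1)}"
      by (intro card_Un_disjoint finite_subset[OF _ finF]) auto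
    finally show ?thesis .
  qed
  moreover have "{R1\<in>?F. even (cnt \<alpha> l R1)} = {R1. U \<subseteq> R1 \<and> R1 \<subseteq> R \<and> card R1 = 2^q \<and> (\<forall>l\<in>insert l L. even (cnt \<alpha> l R1))}"
    by auto
  ultimately show ?case using IHF by simp
qed



lemma chi_shift:
  assumes "y < 2^q"
  shows "chi a (2^q + y) = chi a (2^q) * chi a y"
proof -
  have "chi a (2^q + y) = chi (a mod 2^q) y * chi (a div 2^q) 1"
    using chi_split[of a "2^q + y" q] assms by simp
  moreover have "chi a (2^q) = chi (a div 2^q) 1"
    using chi_split[of a "2^q" q] by simp
  moreover have "chi a y = chi (a mod 2^q) y"
    using chi_split[of a y q] assms by simp
  ultimately show ?thesis by simp
qed

lemma cnt_add: "finite R \<Longrightarrow> R1 \<subseteq> R \<Longrightarrow> cnt \<alpha> l R = cnt \<alpha> l R1 + cnt \<alpha> l (R - R1)"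
proof -
  assume a: "finite R" "R1 \<subseteq> R"
  have "{i\<in>R. bit (\<alpha> i) l} = {i\<in>R1. bit (\<alpha> i) l} \<union> {i\<in>R - R1. bit (\<alpha> i) l}" using a by auto
  then have "cnt \<alpha> l R = card ({i\<in>R1. bit (\<alpha> i) l} \<union> {i\<in>R - R1. bit (\<alpha> i) l})"
    unfolding cnt_def by (rule arg_cong)
  also have "\<dots> = cnt \<alpha> l R1 + cnt \<alpha> l (R - R1)"
    unfolding cnt_def using a by (intro card_Un_disjoint) (auto intro: finite_subset)
  finally show ?thesis .
qed

lemma eps_sign: "finite S \<Longrightarrow> (\<Prod>i\<in>S. chi (\<alpha> i) (2^q)) = (-1) ^ cnt \<alpha> q S"
  by (simp add: chi_pow2 prod_sign cnt_def)

lemma gperm_base: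
  assumes "finite R" "card R = 1"
  shows "gperm 1 R \<alpha> = 1"
proof -
  obtain r where R: "R = {r}" using assms card_1_singletonE by blast
  define g :: "nat \<Rightarrow> nat" where "g = (\<lambda>i. if i = r then 0 else undefined)"
  have "Bij R {..<1} = {g}"
  proof
    show "Bij R {..<1} \<subseteq> {g}"
    proof
      fix f assume "f \<in> Bij R {..<1}"
      then have "f \<in> R \<rightarrow>\<^sub>E {..<1}" by (simp add: Bij_def)
      then have "f = g" unfolding g_def R by (auto simp: PiE_def extensional_def)
      then show "f \<in> {g}" by simp
    qed
    show "{g} \<subseteq> Bij R {..<1}"
      unfolding R by (auto simp: Bij_def g_def bij_betw_def PiE_def extensional_def)
  qed
  then show ?thesis unfolding gperm_def using R g_def by simp
qed

lemma gperm_nonzero: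
  "finite R \<Longrightarrow> card R = 2^q \<Longrightarrow> \<forall>l<q. even (cnt \<alpha> l R) \<Longrightarrow>
   \<exists>z. odd z \<and> gperm (2^q) R \<alpha> = 2^(2^q - 1) * z"
proof (induction q arbitrary: R)
  case 0
  then show ?case using gperm_base[of R \<alpha>] by (intro exI[of _ 1]) simp
next
  case (Suc q)
  define n :: nat where "n = 2^q"
  have n1: "1 \<le> n" by (simp add: n_def)
  have fin: "finite R" and cR: "card R = 2 * n" and evR: "\<forall>l<Suc q. even (cnt \<alpha> l R)"
    using Suc.prems by (auto simp: n_def)
  let ?Sub = "{R1. R1 \<subseteq> R \<and> card R1 = n}"
  define eps where "eps S = (\<Prod>i\<in>S. chi (\<alpha> i) n)" for S
  define T where "T R1 = gperm n R1 \<alpha> * (eps (R - R1) * gperm n (R - R1) \<alpha>)" for R1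
  define Good where "Good R1 = (\<forall>l<q. even (cnt \<alpha> l R1))" for R1
  have finSub: "finite ?Sub" using fin by (rule finite_subset[rotated, OF finite_Pow_iff[THEN iffD2]]) auto
  have step1: "gperm (2^Suc q) R \<alpha> = (\<Sum>R1\<in>?Sub. T R1)"
  proof -
    have "gperm (2^Suc q) R \<alpha> = (\<Sum>f\<in>Bij R {..<2*n}. \<Prod>i\<in>R. chi (\<alpha> i) (f i))"
      by (simp add: gperm_def n_def)
    also have "\<dots> = (\<Sum>R1\<in>?Sub. (\<Sum>f1\<in>Bij R1 {..<n}. \<Prod>i\<in>R1. chi (\<alpha> i) (f1 i)) *
        (\<Sum>f2\<in>Bij (R - R1) {..<n}. \<Prod>i\<in>R-R1. chi (\<alpha> i) (n + f2 i)))"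
      using fin by (rule laplace)
    also have "\<dots> = (\<Sum>R1\<in>?Sub. T R1)"
    proof (rule sum.cong[OF refl])
      fix R1 assume "R1 \<in> ?Sub"
      have "(\<Sum>f2\<in>Bij (R - R1) {..<n}. \<Prod>i\<in>R-R1. chi (\<alpha> i) (n + f2 i))
          = (\<Sum>f2\<in>Bij (R - R1) {..<n}. eps (R - R1) * (\<Prod>i\<in>R-R1. chi (\<alpha> i) (f2 i)))"
      proof (rule sum.cong[OF refl])
        fix f2 assume f2: "f2 \<in> Bij (R - R1) {..<n}"
        have "(\<Prod>i\<in>R-R1. chi (\<alpha> i) (n + f2 i)) = (\<Prod>i\<in>R-R1. chi (\<alpha> i) n * chi (\<alpha> i) (f2 i))"
        proof (rule prod.cong[OF refl])
          fix i assume "i \<in> R - R1"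
          then have "f2 i < 2^q" using f2 by (auto simp: Bij_def PiE_def Pi_def n_def)
          then show "chi (\<alpha> i) (n + f2 i) = chi (\<alpha> i) n * chi (\<alpha> i) (f2 i)"
            unfolding n_def by (rule chi_shift)
        qed
        then show "(\<Prod>i\<in>R-R1. chi (\<alpha> i) (n + f2 i)) = eps (R - R1) * (\<Prod>i\<in>R-R1. chi (\<alpha> i) (f2 i))"
          by (simp add: prod.distrib eps_def)
      qed
      then show "(\<Sum>f1\<in>Bij R1 {..<n}. \<Prod>i\<in>R1. chi (\<alpha> i) (f1 i)) *
        (\<Sum>f2\<in>Bij (R - R1) {..<n}. \<Prod>i\<in>R-R1. chi (\<alpha> i) (n + f2 i)) = T R1"
        by (simp add: T_def gperm_def sum_distrib_left)
    qed
    finally show ?thesis .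
  qed
  have epsR: "eps S = (-1) ^ cnt \<alpha> q S" if "finite S" for S
    using that unfolding eps_def n_def by (rule eps_sign)
  have Tsym: "T R1 = T (R - R1)" if "R1 \<in> ?Sub" for R1
  proof -
    have sub: "R1 \<subseteq> R" and finR1: "finite R1" using that fin by (auto intro: finite_subset)
    have "even (cnt \<alpha> q R1 + cnt \<alpha> q (R - R1))" using evR cnt_add[OF fin sub, of \<alpha> q] by auto
    then have "eps R1 = eps (R - R1)" using finR1 fin
      by (auto simp: epsR minus_one_power_iff)
    moreover have "R - (R - R1) = R1" using sub by auto
    ultimately show ?thesis by (simp add: T_def)
  qed
  have Tzero: "T R1 = 0" if h: "R1 \<in> ?Sub" "\<not> Good R1" for R1
  proof -
    obtain l where l: "l < q" "odd (cnt \<alpha> l R1)" using h(2) by (auto simp: Good_def)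
    have "finite R1" using h fin by (auto intro: finite_subset)
    then have "gperm n R1 \<alpha> = 0" unfolding n_def using l by (intro gperm_zero)
    then show ?thesis by (simp add: T_def)
  qed
  have Tgood: "\<exists>w. odd w \<and> T R1 = 2^(2*n - 2) * w" if h: "R1 \<in> ?Sub" "Good R1" for R1
  proof -
    have sub: "R1 \<subseteq> R" and finR1: "finite R1" and c1: "card R1 = n" using h fin by (auto intro: finite_subset)
    have c2: "card (R - R1) = n" using cR c1 sub fin by (simp add: card_Diff_subset finR1)
    have g2: "\<forall>l<q. even (cnt \<alpha> l (R - R1))"
    proof (intro allI impI)
      fix l assume "l < q"
      then have "even (cnt \<alpha> l R)" "even (cnt \<alpha> l R1)" using evR h(2) by (auto simp: Good_def)
      then show "even (cnt \<alpha> l (R - R1))" using cnt_add[OF fin sub, of \<alpha> l] by simp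
    qed
    obtain z1 where z1: "odd z1" "gperm n R1 \<alpha> = 2^(n - 1) * z1"
      using Suc.IH[of R1] finR1 c1 h(2) by (auto simp: Good_def n_def)
    obtain z2 where z2: "odd z2" "gperm n (R - R1) \<alpha> = 2^(n - 1) * z2"
      using Suc.IH[of "R - R1"] fin c2 g2 by (auto simp: n_def)
    have e: "eps (R - R1) = 1 \<or> eps (R - R1) = -1" using epsR[of "R - R1"] fin
      by (auto simp: minus_one_power_iff)
    have p: "(2::int)^(n - 1) * 2^(n - 1) = 2^(2*n - 2)"
      using n1 by (simp add: power_add[symmetric])
    have "T R1 = 2^(2*n - 2) * (eps (R - R1) * z1 * z2)"
      unfolding T_def z1 z2 p[symmetric] by (simp add: algebra_simps)
    moreover have "odd (eps (R - R1) * z1 * z2)" using e z1 z2 by auto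
    ultimately show ?thesis by blast
  qed
  have "R \<noteq> {}" using cR n1 by auto
  then obtain r0 where r0: "r0 \<in> R" by auto
  let ?SubA = "{R1\<in>?Sub. r0 \<in> R1}"
  let ?SubB = "{R1\<in>?Sub. r0 \<notin> R1}"
  let ?GA = "{R1\<in>?SubA. Good R1}"
  have fin0: "finite ?SubA" and fin1: "finite ?SubB" and finG: "finite ?GA"
    by (rule finite_subset[OF _ finSub]; auto)+
  have "(\<Sum>R1\<in>?Sub. T R1) = (\<Sum>R1\<in>?SubA \<union> ?SubB. T R1)"
    by (rule sum.cong) auto
  also have "\<dots> = (\<Sum>R1\<in>?SubA. T R1) + (\<Sum>R1\<in>?SubB. T R1)"
    using fin0 fin1 by (intro sum.union_disjoint) auto
  also have "(\<Sum>R1\<in>?SubB. T R1) = (\<Sum>R1\<in>?SubA. T R1)"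
  proof (rule sum.reindex_bij_witness[where i="\<lambda>R1. R - R1" and j="\<lambda>R1. R - R1"])
    fix a assume a: "a \<in> ?SubB"
    then show "R - (R - a) = a" by auto
    have "finite a" using a fin by (auto intro: finite_subset)
    then have "card (R - a) = n" using a cR by (simp add: card_Diff_subset)
    then show "R - a \<in> ?SubA" using a r0 by auto
    show "T (R - a) = T a" using Tsym[of a] a by simp
  next
    fix b assume b: "b \<in> ?SubA"
    then show "R - (R - b) = b" by auto
    have "finite b" using b fin by (auto intro: finite_subset)
    then have "card (R - b) = n" using b cR by (simp add: card_Diff_subset)
    moreover have "r0 \<notin> R - b" using b by auto
    ultimately show "R - b \<in> ?SubB" by blast
  qed
  also have "(\<Sum>R1\<in>?SubA. T R1) = (\<Sum>R1\<in>?GA. T R1)"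
    using fin0 Tzero by (intro sum.mono_neutral_right) auto
  finally have S1: "(\<Sum>R1\<in>?Sub. T R1) = 2 * (\<Sum>R1\<in>?GA. T R1)" by simp
  have "\<forall>R1\<in>?GA. \<exists>w. odd w \<and> T R1 = 2^(2*n - 2) * w" using Tgood by auto
  then obtain w where w: "\<forall>R1\<in>?GA. odd (w R1) \<and> T R1 = 2^(2*n - 2) * w R1"
    by (metis (no_types, lifting) bchoice)
  have S2: "(\<Sum>R1\<in>?GA. T R1) = 2^(2*n - 2) * (\<Sum>R1\<in>?GA. w R1)"
    unfolding sum_distrib_left using w by (intro sum.cong) auto
  have "?GA = {R1. {r0} \<subseteq> R1 \<and> R1 \<subseteq> R \<and> card R1 = 2^q \<and> (\<forall>l\<in>{..<q}. even (cnt \<alpha> l R1))}"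
    by (auto simp: Good_def n_def)
  moreover have "odd (card {R1. {r0} \<subseteq> R1 \<and> R1 \<subseteq> R \<and> card R1 = 2^q \<and> (\<forall>l\<in>{..<q}. even (cnt \<alpha> l R1))})"
    using fin cR evR r0 by (intro parity_count) (auto simp: n_def)
  ultimately have oG: "odd (card ?GA)" by simp
  have oW: "odd (\<Sum>R1\<in>?GA. w R1)" using sum_odds[OF finG, of w] w oG by auto
  have pw: "(2::int) * 2^(2*n - 2) = 2^(2^Suc q - 1)"
  proof -
    have "(2::nat)^Suc q = 2*n" by (simp add: n_def)
    then have "Suc (2*n - 2) = 2^Suc q - 1" using n1 by linarith
    then show ?thesis by (metis power_Suc)
  qed
  show ?case
    using step1 S1 S2 oW pw by (intro exI[of _ "\<Sum>R1\<in>?GA. w R1"]) simp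
qed



lemma perm_mat_int:
  "perm_mat n (\<lambda>i j. real_of_int (B i j)) = real_of_int (\<Sum>f\<in>Bij {..<n} {..<n}. \<Prod>i\<in>{..<n}. B i (f i))"
proof -
  let ?S = "{..<n::nat}"
  have "(\<Sum>\<sigma> | \<sigma> permutes ?S. \<Prod>i\<in>?S. B i (\<sigma> i)) = (\<Sum>f\<in>Bij ?S ?S. \<Prod>i\<in>?S. B i (f i))"
  proof (rule sum.reindex_bij_witness[where j="\<lambda>\<sigma>. restrict \<sigma> ?S" and i="\<lambda>f x. if x \<in> ?S then f x else x"])
    fix \<sigma> assume "\<sigma> \<in> {\<sigma>. \<sigma> permutes ?S}"
    then have s: "\<sigma> permutes ?S" by simp
    show "(\<lambda>x. if x \<in> ?S then restrict \<sigma> ?S x else x) = \<sigma>"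
      using s by (auto simp: permutes_not_in)
    have "bij_betw \<sigma> ?S ?S" using s by (rule permutes_imp_bij)
    then have "bij_betw (restrict \<sigma> ?S) ?S ?S" by (rule bij_betw_cong[THEN iffD1, rotated]) simp
    moreover have "restrict \<sigma> ?S \<in> ?S \<rightarrow>\<^sub>E ?S" using permutes_in_image[OF s] by auto
    ultimately show "restrict \<sigma> ?S \<in> Bij ?S ?S" by (simp add: Bij_def)
    show "(\<Prod>i\<in>?S. B i (restrict \<sigma> ?S i)) = (\<Prod>i\<in>?S. B i (\<sigma> i))" by (rule prod.cong) auto
  next
    fix f assume f: "f \<in> Bij ?S ?S"
    then have fP: "f \<in> ?S \<rightarrow>\<^sub>E ?S" and fb: "bij_betw f ?S ?S" by (auto simp: Bij_def)
    show "restrict (\<lambda>x. if x \<in> ?S then f x else x) ?S = f"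
      using fP by (auto simp: restrict_def PiE_def extensional_def)
    have "bij_betw (\<lambda>x. if x \<in> ?S then f x else x) ?S ?S" using fb by (rule bij_betw_cong[THEN iffD1, rotated]) simp
    then have "(\<lambda>x. if x \<in> ?S then f x else x) permutes ?S" by (rule bij_imp_permutes) simp
    then show "(\<lambda>x. if x \<in> ?S then f x else x) \<in> {\<sigma>. \<sigma> permutes ?S}" by simp
  qed
  then have "real_of_int (\<Sum>\<sigma> | \<sigma> permutes ?S. \<Prod>i\<in>?S. B i (\<sigma> i)) = real_of_int (\<Sum>f\<in>Bij ?S ?S. \<Prod>i\<in>?S. B i (f i))"
    by simp
  then show ?thesis unfolding perm_mat_def of_int_sum of_int_prod .
qed

lemma xor_list_bit: "bit (xor_list xs) l \<longleftrightarrow> odd (length (filter (\<lambda>x. bit x l) xs))"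
  by (induction xs) (auto simp: xor_list_def bit_xor_iff)

lemma gperm_iff_xor:
  fixes xs :: "nat list"
  assumes len: "length xs = 2^q" and small: "\<forall>x\<in>set xs. x < 2^q"
  shows "gperm (2^q) {..<2^q} (\<lambda>i. xs ! i) = 0 \<longleftrightarrow> xor_list xs \<noteq> 0"
proof -
  have cntl: "cnt (\<lambda>i. xs ! i) l {..<2^q} = length (filter (\<lambda>x. bit x l) xs)" for l
    unfolding cnt_def length_filter_conv_card len by (rule arg_cong[where f=card]) auto
  show ?thesis
  proof
    assume g: "gperm (2^q) {..<2^q} (\<lambda>i. xs ! i) = 0"
    show "xor_list xs \<noteq> 0"
    proof
      assume x0: "xor_list xs = 0"
      have "\<forall>l<q. even (cnt (\<lambda>i. xs ! i) l {..<2^q})"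
        using x0 xor_list_bit[of xs] by (auto simp: cntl)
      then obtain z where "odd z" "gperm (2^q) {..<2^q} (\<lambda>i. xs ! i) = 2^(2^q - 1) * z"
        using gperm_nonzero[of "{..<2^q}" q] by auto
      then show False using g by auto
    qed
  next
    assume nz: "xor_list xs \<noteq> 0"
    have "\<exists>l. bit (xor_list xs) l"
    proof (rule ccontr)
      assume "\<not> (\<exists>l. bit (xor_list xs) l)"
      then have "xor_list xs = 0" by (simp add: bit_eq_iff)
      then show False using nz by simp
    qed
    then obtain l where l: "bit (xor_list xs) l" by blast
    then have o: "odd (length (filter (\<lambda>x. bit x l) xs))" by (simp add: xor_list_bit)
    then have "filter (\<lambda>x. bit x l) xs \<noteq> []" by auto
    then obtain x where "x \<in> set xs" "bit x l" by (auto simp: filter_empty_conv)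
    then have "l < q" using small
      by (metis bit_take_bit_iff take_bit_nat_eq_self)
    then show "gperm (2^q) {..<2^q} (\<lambda>i. xs ! i) = 0"
      using o by (intro gperm_zero) (auto simp: cntl)
  qed
qed



lemma perm_mat_cong:
  assumes "\<And>i j. i < n \<Longrightarrow> j < n \<Longrightarrow> A i j = B i j"
  shows "perm_mat n A = perm_mat n B"
  unfolding perm_mat_def
proof (rule sum.cong[OF refl], rule prod.cong[OF refl])
  fix \<sigma> i assume "\<sigma> \<in> {\<sigma>. \<sigma> permutes {..<n}}" "i \<in> {..<n}"
  then show "A i (\<sigma> i) = B i (\<sigma> i)" using assms permutes_in_image[of \<sigma> "{..<n}" i] by auto
qed

lemma perm_mat_rowscale:
  "perm_mat n (\<lambda>i j. r i * B i j) = (\<Prod>i<n. r i) * perm_mat n B"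
  unfolding perm_mat_def by (simp add: prod.distrib sum_distrib_left)

theorem proposition7:
  fixes k q c :: nat and t :: "nat list"
  assumes "c \<le> 2 ^ k - 1"
  assumes "is_state (2 ^ (k + q)) (2 ^ q) t"
  shows "suppressed (2 ^ (k + q)) (U_had (k + q))
           (map (\<lambda>i. i + 2 ^ q * c) [1..<2 ^ q + 1]) t
         \<longleftrightarrow> xor_list (map (\<lambda>x. beta q (x - 1)) t) \<noteq> 0"
proof -
  define n :: nat where "n = 2^q"
  define p where "p = k + q"
  define s where "s = map (\<lambda>i. i + 2 ^ q * c) [1..<2 ^ q + 1]"
  define xs where "xs = map (\<lambda>x. beta q (x - 1)) t"
  have lt: "length t = n" and tr: "\<forall>x\<in>set t. 1 \<le> x \<and> x \<le> 2^p"
    using assms(2) by (auto simp: is_state_def n_def p_def)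
  have ls: "length s = n" by (simp add: s_def n_def)
  have sj: "s ! j = Suc j + n * c" if "j < n" for j
    using that by (simp add: s_def n_def nth_upt del: upt_Suc)
  have lxs: "length xs = n" by (simp add: xs_def lt)
  have xsi: "xs ! i = (t ! i - 1) mod n" if "i < n" for i
    using that lt by (simp add: xs_def beta_def n_def)
  have pn: "(2::nat)^p = n * 2^k" by (simp add: p_def n_def power_add)
  have k1: "1 \<le> (2::nat)^k" by simp
  have ck: "c + 1 \<le> 2^k" using assms(1) k1 by linarith
  have bnd: "Suc j + n * c \<le> 2^p" if "j < n" for j
  proof -
    have "n * (c + 1) \<le> n * 2^k" using ck by (rule mult_le_mono2)
    then show ?thesis using that pn by (simp add: algebra_simps)
  qed
  define r where "r i = real_of_int (chi ((t ! i - 1) div n) c) / sqrt (2^p)" for i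
  have scat: "scatter (U_had p) s t i j = r i * real_of_int (chi (xs ! i) j)" if "i < n" "j < n" for i j
  proof -
    have ti: "1 \<le> t ! i" "t ! i \<le> 2^p" using tr that lt by auto
    have "sylvester p (t ! i) (s ! j) = real_of_int (chi (t ! i - 1) (j + n * c))"
      using sylvester_chi[of "t ! i" p "s ! j"] ti bnd[OF that(2)] sj[OF that(2)] by simp
    also have "chi (t ! i - 1) (j + n * c) = chi ((t ! i - 1) mod n) j * chi ((t ! i - 1) div n) c"
      using chi_split[of "t ! i - 1" "j + n * c" q] that(2) by (simp add: n_def)
    finally show ?thesis
      unfolding scatter_def U_had_def r_def using xsi[OF that(1)] by simp
  qed
  have "perm_mat n (scatter (U_had p) s t) = perm_mat n (\<lambda>i j. r i * real_of_int (chi (xs ! i) j))"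
    by (rule perm_mat_cong) (rule scat)
  also have "\<dots> = (\<Prod>i<n. r i) * real_of_int (gperm n {..<n} (\<lambda>i. xs ! i))"
    unfolding perm_mat_rowscale perm_mat_int gperm_def by simp
  finally have pm: "perm_mat n (scatter (U_had p) s t) = (\<Prod>i<n. r i) * real_of_int (gperm n {..<n} (\<lambda>i. xs ! i))" .
  have rnz: "(\<Prod>i<n. r i) \<noteq> 0"
    by (simp add: r_def chi_nz)
  have den: "sqrt (real ((\<Prod>k\<in>{1..2^p}. fact (occ s k)) * (\<Prod>k\<in>{1..2^p}. fact (occ t k)))) \<noteq> 0"
    by (simp add: fact_nonzero)
  have "suppressed (2^p) (U_had p) s t \<longleftrightarrow> perm_mat n (scatter (U_had p) s t) = 0"
    unfolding suppressed_def amplitude_def ls using den by simp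
  also have "\<dots> \<longleftrightarrow> gperm n {..<n} (\<lambda>i. xs ! i) = 0" using pm rnz by simp
  also have "\<dots> \<longleftrightarrow> xor_list xs \<noteq> 0"
    unfolding n_def
  proof (rule gperm_iff_xor)
    show "length xs = 2^q" using lxs n_def by simp
    show "\<forall>x\<in>set xs. x < 2^q" by (auto simp: xs_def beta_def)
  qed
  finally show ?thesis by (simp add: s_def xs_def p_def)
qed

end
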